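(* Let $0<p<1$ and let $X_p$ be a $\mathbb{P}^1(\mathbb{R})$-valued random variable satisfying $X_p \sim \frac{1}{X_p}+\epsilon_p$ with $\epsilon_p\sim\mathrm{Bernoulli}(p)$ independent of $X_p$. Then \[ \mathbb{E}[\log X_p]=\frac{p}{2}\,\mathbb{E}\big[\log(1+X_p)\big]. \]
   Context: $\mathbb{P}^1(\mathbb{R})$ is identified with $\mathbb{R}\cup\{\infty\}$ (with $1/0=\infty$, $1/\infty=0$). $\epsilon_p\sim\mathrm{Bernoulli}(p)$ means $\mathbb{P}(\epsilon_p=1)=p$, $\mathbb{P}(\epsilon_p=0)=1-p$. The law of such $X_p$ is unique, atomless, $X_p\in(0,\infty)$ a.s., and $0<\mathbb{E}[\log X_p]<\infty$. *)

theory Defs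
  imports "HOL-Probability.Probability"
begin

text \<open>The real projective line P^1(R) = R \<union> {\<infinity>}, modelled as \<open>real option\<close>:
  \<open>Some x\<close> is the finite point x, \<open>None\<close> is \<infinity>.\<close>
type_synonym proj = "real option"

text \<open>Borel sigma-algebra on P^1(R): a set is measurable iff its finite part is Borel.\<close>
definition P1 :: "proj measure" where
  "P1 = measure_of UNIV {A. Some -` A \<in> sets borel} (\<lambda>_. 0)"

fun pinv :: "proj \<Rightarrow> proj" where
  "pinv None = Some 0"
| "pinv (Some x) = (if x = 0 then None else Some (1 / x))"

fun padd :: "proj \<Rightarrow> real \<Rightarrow> proj" where
  "padd None e = None"
| "padd (Some x) e = Some (x + e)"

end

theory Submission
  imports Defs
begin



lemma sets_P1: "sets P1 = {A. Some -` A \<in> sets borel}"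
proof -
  have "sigma_algebra UNIV {A::proj set. Some -` A \<in> sets borel}"
    unfolding sigma_algebra_iff2
  proof (intro conjI ballI allI impI)
    fix s assume "s \<in> {A::proj set. Some -` A \<in> sets borel}"
    then show "UNIV - s \<in> {A::proj set. Some -` A \<in> sets borel}"
      by (simp add: vimage_Diff sets.compl_sets[of borel, simplified])
  next
    fix A :: "nat \<Rightarrow> proj set" assume "range A \<subseteq> {A. Some -` A \<in> sets borel}"
    then show "(\<Union>i. A i) \<in> {A. Some -` A \<in> sets borel}" by (auto simp: vimage_Union)
  qed auto
  then show ?thesis unfolding P1_def
    by (subst sets_measure_of) (auto simp: sigma_algebra.sigma_sets_eq)
qed

lemma space_P1[simp]: "space P1 = UNIV"
  unfolding P1_def by (simp add: space_measure_of_conv)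

lemma measurable_from_P1:
  assumes "(\<lambda>x. g (Some x)) \<in> measurable borel N" "space N = UNIV"
  shows "g \<in> measurable P1 N"
proof (rule measurableI)
  fix B assume "B \<in> sets N"
  then have "(\<lambda>x. g (Some x)) -` B \<inter> space borel \<in> sets borel"
    using assms(1) measurable_sets by blast
  then show "g -` B \<inter> space P1 \<in> sets P1" by (simp add: sets_P1 vimage_def)
qed (use assms in auto)

lemma measurable_to_P1:
  assumes "\<And>A. Some -` A \<in> sets borel \<Longrightarrow> f -` A \<inter> space N \<in> sets N"
  shows "f \<in> measurable N P1"
  by (rule measurableI) (auto simp: sets_P1 assms)

lemma pinv_meas: "pinv \<in> measurable P1 P1"
proof (rule measurable_from_P1[OF measurable_to_P1])
  fix A :: "proj set" assume A: "Some -` A \<in> sets borel"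
  have m: "(\<lambda>x::real. 1 / x) \<in> borel_measurable borel" by measurable
  have "(\<lambda>x::real. 1/x) -` (Some -` A) \<inter> space borel \<in> sets borel"
    using measurable_sets[OF m A] .
  then have "{x::real. x \<noteq> 0} \<inter> ((\<lambda>x::real. 1/x) -` (Some -` A)) \<in> sets borel" by auto
  moreover have "(\<lambda>x. pinv (Some x)) -` A = (if None \<in> A then {0} else {}) \<union> ({x::real. x \<noteq> 0} \<inter> ((\<lambda>x::real. 1/x) -` (Some -` A)))"
    by (auto split: if_splits)
  ultimately show "(\<lambda>x. pinv (Some x)) -` A \<inter> space borel \<in> sets borel" by auto
qed simp

lemma padd1_meas: "(\<lambda>x. padd x 1) \<in> measurable P1 P1"
proof (rule measurable_from_P1[OF measurable_to_P1])
  fix A :: "proj set" assume A: "Some -` A \<in> sets borel"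
  have m: "(\<lambda>x::real. x + 1) \<in> borel_measurable borel" by measurable
  have "(\<lambda>x::real. x + 1) -` (Some -` A) \<inter> space borel \<in> sets borel"
    using measurable_sets[OF m A] .
  moreover have "(\<lambda>x. padd (Some x) 1) -` A = (\<lambda>x::real. x + 1) -` (Some -` A)" by auto
  ultimately show "(\<lambda>x. padd (Some x) 1) -` A \<inter> space borel \<in> sets borel" by auto
qed simp

definition T :: "proj \<Rightarrow> proj" where "T x = padd (pinv x) 1"

lemma T_meas: "T \<in> measurable P1 P1"
  unfolding T_def using measurable_comp[OF pinv_meas padd1_meas] by (simp add: o_def)

lemma the_meas: "G \<in> borel_measurable borel \<Longrightarrow> (\<lambda>x. G (the x)) \<in> borel_measurable P1"
  by (rule measurable_from_P1) auto

lemma Some_sets: "S \<in> sets borel \<Longrightarrow> Some ` S \<in> sets P1"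
  by (auto simp: sets_P1 inj_vimage_image_eq)

lemma None_sets: "{None} \<in> sets P1"
proof -
  have "Some -` {None} = ({}::real set)" by auto
  then show ?thesis by (simp add: sets_P1)
qed




locale fp =
  fixes M :: "'a measure" and X :: "'a \<Rightarrow> proj" and eps :: "'a \<Rightarrow> real" and p :: real
  assumes prob: "prob_space M"
    and p0: "0 < p" and p1: "p < 1"
    and Xm: "X \<in> measurable M P1"
    and epsm: "eps \<in> borel_measurable M"
    and eps01: "\<forall>\<omega>\<in>space M. eps \<omega> \<in> {0, 1}"
    and peps: "measure M {\<omega>\<in>space M. eps \<omega> = 1} = p"
    and ind: "\<forall>A\<in>sets P1. \<forall>B\<in>sets (borel :: real measure).
         measure M ({\<omega>\<in>space M. X \<omega> \<in> A} \<inter> {\<omega>\<in>space M. eps \<omega> \<in> B})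
         = measure M {\<omega>\<in>space M. X \<omega> \<in> A} * measure M {\<omega>\<in>space M. eps \<omega> \<in> B}"
    and dist: "distr M P1 X = distr M P1 (\<lambda>\<omega>. padd (pinv (X \<omega>)) (eps \<omega>))"

sublocale fp \<subseteq> prob_space M by (rule prob)

context fp begin

definition mu where "mu = distr M P1 X"

lemma mu_prob: "prob_space mu"
  unfolding mu_def by (rule prob_space_distr[OF Xm])

lemma space_mu[simp]: "space mu = UNIV" and sets_mu[simp]: "sets mu = sets P1"
  unfolding mu_def by auto

lemma Y_meas: "(\<lambda>\<omega>. padd (pinv (X \<omega>)) (eps \<omega>)) \<in> measurable M P1"
proof -
  have "(\<lambda>\<omega>. if eps \<omega> = 1 then T (X \<omega>) else pinv (X \<omega>)) \<in> measurable M P1"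
  proof (rule measurable_If)
    show "(\<lambda>\<omega>. T (X \<omega>)) \<in> measurable M P1" using measurable_comp[OF Xm T_meas] by (simp add: o_def)
    show "(\<lambda>\<omega>. pinv (X \<omega>)) \<in> measurable M P1" using measurable_comp[OF Xm pinv_meas] by (simp add: o_def)
    show "{\<omega> \<in> space M. eps \<omega> = 1} \<in> sets M" using epsm by measurable
  qed
  moreover have "\<And>\<omega>. \<omega> \<in> space M \<Longrightarrow> padd (pinv (X \<omega>)) (eps \<omega>) = (if eps \<omega> = 1 then T (X \<omega>) else pinv (X \<omega>))"
  proof -
    fix \<omega> assume "\<omega> \<in> space M"
    then have "eps \<omega> = 0 \<or> eps \<omega> = 1" using eps01 by auto
    then show "padd (pinv (X \<omega>)) (eps \<omega>) = (if eps \<omega> = 1 then T (X \<omega>) else pinv (X \<omega>))"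
      by (cases "pinv (X \<omega>)") (auto simp: T_def)
  qed
  ultimately show ?thesis using measurable_cong by (smt (verit))
qed

lemma Xset: "A \<in> sets P1 \<Longrightarrow> {\<omega>\<in>space M. X \<omega> \<in> A} \<in> sets M"
  using measurable_sets[OF Xm] by (simp add: vimage_def Int_def conj_commute)

lemma epsset: "B \<in> sets borel \<Longrightarrow> {\<omega>\<in>space M. eps \<omega> \<in> B} \<in> sets M"
  using measurable_sets[OF epsm] by (simp add: vimage_def Int_def conj_commute)

lemma peps0: "measure M {\<omega>\<in>space M. eps \<omega> \<in> {0}} = 1 - p"
proof -
  have "{\<omega>\<in>space M. eps \<omega> \<in> {0}} = space M - {\<omega>\<in>space M. eps \<omega> = 1}"
    using eps01 by auto
  then show ?thesis using prob_compl[OF epsset[of "{1}"]] peps by simp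
qed

lemma peps1: "measure M {\<omega>\<in>space M. eps \<omega> \<in> {1}} = p"
  using peps by simp

lemma key_set:
  assumes S: "S \<in> sets P1"
  shows "measure mu S = (1-p) * measure mu (pinv -` S) + p * measure mu (T -` S)"
proof -
  have S1: "pinv -` S \<in> sets P1" using measurable_sets[OF pinv_meas S] by simp
  have S2: "T -` S \<in> sets P1" using measurable_sets[OF T_meas S] by simp
  have "measure mu S = measure (distr M P1 (\<lambda>\<omega>. padd (pinv (X \<omega>)) (eps \<omega>))) S"
    unfolding mu_def dist ..
  also have "\<dots> = measure M ((\<lambda>\<omega>. padd (pinv (X \<omega>)) (eps \<omega>)) -` S \<inter> space M)"
    by (rule measure_distr[OF Y_meas S])
  also have "(\<lambda>\<omega>. padd (pinv (X \<omega>)) (eps \<omega>)) -` S \<inter> space M =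
     ({\<omega>\<in>space M. X \<omega> \<in> pinv -` S} \<inter> {\<omega>\<in>space M. eps \<omega> \<in> {0}}) \<union>
     ({\<omega>\<in>space M. X \<omega> \<in> T -` S} \<inter> {\<omega>\<in>space M. eps \<omega> \<in> {1}})" (is "_ = ?A \<union> ?B")
  proof -
    have "\<And>y. padd y 0 = y" by (case_tac y) auto
    then show ?thesis using eps01 by (auto simp: T_def)
  qed
  also have "measure M (?A \<union> ?B) = measure M ?A + measure M ?B"
  proof (rule finite_measure_Union)
    show "?A \<in> sets M" by (intro sets.Int Xset epsset S1) simp_all
    show "?B \<in> sets M" by (intro sets.Int Xset epsset S2) simp_all
  qed auto
  also have "measure M ?A = measure mu (pinv -` S) * (1 - p)"
  proof -
    have "measure mu (pinv -` S) = measure M {\<omega>\<in>space M. X \<omega> \<in> pinv -` S}"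
      unfolding mu_def measure_distr[OF Xm S1] by (rule arg_cong[where f="measure M"]) auto
    moreover have "measure M ?A = measure M {\<omega>\<in>space M. X \<omega> \<in> pinv -` S} * measure M {\<omega>\<in>space M. eps \<omega> \<in> {0}}"
      by (rule ind[rule_format, OF S1]) simp
    ultimately show ?thesis using peps0 by simp
  qed
  also have "measure M ?B = measure mu (T -` S) * p"
  proof -
    have "measure mu (T -` S) = measure M {\<omega>\<in>space M. X \<omega> \<in> T -` S}"
      unfolding mu_def measure_distr[OF Xm S2] by (rule arg_cong[where f="measure M"]) auto
    moreover have "measure M ?B = measure M {\<omega>\<in>space M. X \<omega> \<in> T -` S} * measure M {\<omega>\<in>space M. eps \<omega> \<in> {1}}"
      by (rule ind[rule_format, OF S2]) simp
    ultimately show ?thesis using peps1 by simp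
  qed
  finally show ?thesis by simp
qed

end



lemma e1: "pinv -` (Some ` {..<0::real}) = Some ` {..<0}"
proof (rule set_eqI)
  fix x :: proj show "x \<in> pinv -` (Some ` {..<0::real}) \<longleftrightarrow> x \<in> Some ` {..<0}"
    by (cases x) (auto simp: image_iff)
qed

lemma e2: "T -` (Some ` {..<0::real}) = Some ` {-1<..<0}"
proof (rule set_eqI)
  fix x :: proj show "x \<in> T -` (Some ` {..<0::real}) \<longleftrightarrow> x \<in> Some ` {-1<..<0}"
  proof (cases x)
    case (Some y)
    have "y \<noteq> 0 \<and> 1/y + 1 < 0 \<longleftrightarrow> -1 < y \<and> y < 0"
    proof (cases "y < 0")
      case True then show ?thesis by (auto simp: field_simps)
    next
      case False then show ?thesis by (auto simp: field_simps not_less)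
    qed
    then show ?thesis using Some by (auto simp: image_iff T_def)
  qed (auto simp: image_iff T_def)
qed

lemma e3: "pinv -` (Some ` {..-1::real}) = Some ` {-1..<0}"
proof (rule set_eqI)
  fix x :: proj show "x \<in> pinv -` (Some ` {..-1::real}) \<longleftrightarrow> x \<in> Some ` {-1..<0}"
  proof (cases x)
    case (Some y)
    have "y \<noteq> 0 \<and> 1/y \<le> -1 \<longleftrightarrow> -1 \<le> y \<and> y < 0"
    proof (cases "y < 0")
      case True then show ?thesis by (auto simp: field_simps)
    next
      case False then show ?thesis by (auto simp: field_simps not_less)
    qed
    then show ?thesis using Some by (auto simp: image_iff)
  qed (auto simp: image_iff)
qed

lemma e4: "pinv -` {None} = {Some 0}" "pinv -` {Some 0} = {None}"
  "T -` {None} = {Some 0}" "T -` {Some 0} = {Some (-1)}"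
  apply (auto simp: T_def)
  apply (case_tac x, auto split: if_splits)
  apply (case_tac x, auto split: if_splits)
  apply (case_tac x, auto split: if_splits)
  apply (case_tac x, auto split: if_splits simp: field_simps)
  done

context fp begin

lemma pos_AE: "AE x in mu. x \<in> Some ` {0<..}"
proof -
  interpret m: prob_space mu by (rule mu_prob)
  let ?N = "Some ` {..<0::real}"
  let ?N1 = "Some ` {-1<..<0::real}"
  let ?N2 = "Some ` {..-1::real}"
  let ?N3 = "Some ` {-1..<0::real}"
  have sN: "Some ` S \<in> sets mu" if "S \<in> sets borel" for S using Some_sets[OF that] by simp
  have "m.prob ?N = (1-p) * m.prob ?N + p * m.prob ?N1"
    using key_set[OF Some_sets[of "{..<0}"]] e1 e2 by simp
  then have h1: "m.prob ?N1 = m.prob ?N" using p0 by (simp add: algebra_simps)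
  have "?N = ?N1 \<union> ?N2" by (auto simp: image_iff not_le)
  moreover have "m.prob (?N1 \<union> ?N2) = m.prob ?N1 + m.prob ?N2"
    by (rule m.finite_measure_Union) (auto intro!: Some_sets)
  ultimately have h2: "m.prob ?N2 = 0" using h1 by simp
  have "m.prob ?N2 = (1-p) * m.prob ?N3 + p * m.prob (T -` ?N2)"
    using key_set[OF Some_sets[of "{..-1}"]] e3 by simp
  moreover have "0 \<le> p * m.prob (T -` ?N2)" using p0 by simp
  moreover have "0 \<le> (1-p) * m.prob ?N3" using p1 by simp
  ultimately have "(1-p) * m.prob ?N3 = 0" using h2 by linarith
  then have h3: "m.prob ?N3 = 0" using p1 by simp
  have "?N = ?N2 \<union> ?N3" by (auto simp: image_iff)
  then have "m.prob ?N \<le> m.prob ?N2 + m.prob ?N3"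
    using measure_subadditive[of ?N2 mu ?N3] by (simp add: Some_sets)
  then have hN: "m.prob ?N = 0" using h2 h3 by (simp add: measure_le_0_iff)
  have "m.prob {Some (-1)} \<le> m.prob ?N"
    by (rule m.finite_measure_mono) (auto intro!: Some_sets)
  then have hm1: "m.prob {Some (-1)} = 0" using hN by (simp add: measure_le_0_iff)
  have "m.prob {Some 0} = (1-p) * m.prob {None} + p * m.prob {Some (-1)}"
    using key_set[of "{Some 0}"] e4 Some_sets[of "{0}"] by simp
  moreover have "m.prob {None} = (1-p) * m.prob {Some 0} + p * m.prob {Some 0}"
    using key_set[OF None_sets] e4 by simp
  ultimately have h0: "m.prob {Some 0} = 0" "m.prob {None} = 0" using hm1 p0
    by (auto simp: algebra_simps)
  have "UNIV - Some ` {0<..} = ?N \<union> {Some 0} \<union> {None}"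
  proof (rule set_eqI)
    fix x :: proj
    show "x \<in> UNIV - Some ` {0<..} \<longleftrightarrow> x \<in> ?N \<union> {Some 0} \<union> {None}"
    proof (cases x)
      case (Some y)
      then show ?thesis by (cases "y < 0"; cases "y = 0") (auto simp: image_iff)
    qed (auto simp: image_iff)
  qed
  moreover have "m.prob (?N \<union> {Some 0} \<union> {None}) = 0"
  proof -
    have s1: "?N \<in> sets mu" "{Some 0} \<in> sets mu" "{None} \<in> sets mu"
      using Some_sets[of "{..<0}"] Some_sets[of "{0}"] None_sets by auto
    have s2: "?N \<union> {Some 0} \<in> sets mu" using s1 by (intro sets.Un) auto
    have "m.prob (?N \<union> {Some 0} \<union> {None}) \<le> m.prob (?N \<union> {Some 0}) + m.prob {None}"
      by (rule measure_subadditive[OF s2 s1(3)]) (use m.emeasure_finite in auto)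
    also have "m.prob (?N \<union> {Some 0}) \<le> m.prob ?N + m.prob {Some 0}"
      by (rule measure_subadditive) (use s1 m.emeasure_finite in auto)
    finally show ?thesis using hN h0 by (simp add: measure_le_0_iff)
  qed
  ultimately have "m.prob (UNIV - Some ` {0<..}) = 0" by simp
  moreover have "UNIV - Some ` {0<..} \<in> sets mu"
    using sN[of "{0<..}"] by (metis sets.compl_sets space_mu greaterThan_borel)
  ultimately have "UNIV - Some ` {0<..} \<in> null_sets mu"
    by (simp add: m.emeasure_eq_measure null_sets_def)
  then show ?thesis by (rule AE_I') auto
qed

end



context fp begin

lemma bm_mu: "borel_measurable mu = borel_measurable P1"
  by (rule measurable_cong_sets) simp_all

lemma mm_mu: "measurable mu mu = measurable P1 P1"
  by (rule measurable_cong_sets) simp_all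

lemma pinv_mu: "pinv \<in> measurable mu mu" and T_mu: "T \<in> measurable mu mu"
  unfolding mm_mu by (rule pinv_meas, rule T_meas)

lemma nnkey0:
  assumes g: "g \<in> borel_measurable P1"
  shows "(\<integral>\<^sup>+x. g x \<partial>mu) = ennreal (1-p) * (\<integral>\<^sup>+x. g (pinv x) \<partial>mu) + ennreal p * (\<integral>\<^sup>+x. g (T x) \<partial>mu)"
proof -
  interpret m: prob_space mu by (rule mu_prob)
  have "g \<in> borel_measurable mu" unfolding bm_mu by (rule g)
  then show ?thesis
  proof (induction rule: borel_measurable_induct)
    case (cong f g)
    then show ?case by simp
  next
    case (set A)
    have A1: "pinv -` A \<in> sets mu" using measurable_sets[OF pinv_mu set] by simp
    have A2: "T -` A \<in> sets mu" using measurable_sets[OF T_mu set] by simp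
    have "(\<integral>\<^sup>+x. indicator A (pinv x) \<partial>mu) = emeasure mu (pinv -` A)"
      using nn_integral_indicator[OF A1] by (simp add: indicator_vimage[symmetric])
    moreover have "(\<integral>\<^sup>+x. indicator A (T x) \<partial>mu) = emeasure mu (T -` A)"
      using nn_integral_indicator[OF A2] by (simp add: indicator_vimage[symmetric])
    moreover have "emeasure mu A = ennreal (1-p) * emeasure mu (pinv -` A) + ennreal p * emeasure mu (T -` A)"
    proof -
      have sA: "A \<in> sets P1" using set by simp
      have "emeasure mu A = ennreal (measure mu A)" by (rule m.emeasure_eq_measure)
      also have "measure mu A = (1-p) * measure mu (pinv -` A) + p * measure mu (T -` A)"
        by (rule key_set[OF sA])
      also have "ennreal ((1-p) * measure mu (pinv -` A) + p * measure mu (T -` A))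
         = ennreal ((1-p) * measure mu (pinv -` A)) + ennreal (p * measure mu (T -` A))"
        by (rule ennreal_plus) (use p0 p1 in auto)
      also have "\<dots> = ennreal (1-p) * ennreal (measure mu (pinv -` A)) + ennreal p * ennreal (measure mu (T -` A))"
        using p0 p1 by (simp add: ennreal_mult)
      also have "\<dots> = ennreal (1-p) * emeasure mu (pinv -` A) + ennreal p * emeasure mu (T -` A)"
        by (simp add: m.emeasure_eq_measure)
      finally show ?thesis .
    qed
    ultimately show ?case using nn_integral_indicator[OF set] by simp
  next
    case (mult u c)
    have um: "u \<in> borel_measurable mu" using mult by blast
    have Pu: "(\<integral>\<^sup>+x. u x \<partial>mu) = ennreal (1-p) * (\<integral>\<^sup>+x. u (pinv x) \<partial>mu) + ennreal p * (\<integral>\<^sup>+x. u (T x) \<partial>mu)"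
      using mult by blast
    have m1: "(\<lambda>x. u (pinv x)) \<in> borel_measurable mu" using measurable_comp[OF pinv_mu um] by (simp add: o_def)
    have m2: "(\<lambda>x. u (T x)) \<in> borel_measurable mu" using measurable_comp[OF T_mu um] by (simp add: o_def)
    show ?case
      unfolding nn_integral_cmult[OF um] nn_integral_cmult[OF m1] nn_integral_cmult[OF m2] Pu
      by (simp only: distrib_left mult.left_commute)
  next
    case (add u v)
    have um: "u \<in> borel_measurable mu" and vm: "v \<in> borel_measurable mu" using add by blast+
    have Pu: "(\<integral>\<^sup>+x. u x \<partial>mu) = ennreal (1-p) * (\<integral>\<^sup>+x. u (pinv x) \<partial>mu) + ennreal p * (\<integral>\<^sup>+x. u (T x) \<partial>mu)"
      using add by blast
    have Pv: "(\<integral>\<^sup>+x. v x \<partial>mu) = ennreal (1-p) * (\<integral>\<^sup>+x. v (pinv x) \<partial>mu) + ennreal p * (\<integral>\<^sup>+x. v (T x) \<partial>mu)"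
      using add by blast
    have m1: "(\<lambda>x. u (pinv x)) \<in> borel_measurable mu" using measurable_comp[OF pinv_mu um] by (simp add: o_def)
    have m2: "(\<lambda>x. u (T x)) \<in> borel_measurable mu" using measurable_comp[OF T_mu um] by (simp add: o_def)
    have m3: "(\<lambda>x. v (pinv x)) \<in> borel_measurable mu" using measurable_comp[OF pinv_mu vm] by (simp add: o_def)
    have m4: "(\<lambda>x. v (T x)) \<in> borel_measurable mu" using measurable_comp[OF T_mu vm] by (simp add: o_def)
    show ?case
      unfolding nn_integral_add[OF vm um] nn_integral_add[OF m3 m1] nn_integral_add[OF m4 m2] Pu Pv
      by (simp only: distrib_left add.assoc add.left_commute)
  next
    case (seq U)
    have Um: "U i \<in> borel_measurable mu" for i using seq by blast
    have PU: "(\<integral>\<^sup>+x. U i x \<partial>mu) = ennreal (1-p) * (\<integral>\<^sup>+x. U i (pinv x) \<partial>mu) + ennreal p * (\<integral>\<^sup>+x. U i (T x) \<partial>mu)" for i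
      using seq by blast
    have incU: "incseq U" using seq by blast
    have m1: "(\<lambda>x. U i (pinv x)) \<in> borel_measurable mu" for i using measurable_comp[OF pinv_mu Um] by (simp add: o_def)
    have m2: "(\<lambda>x. U i (T x)) \<in> borel_measurable mu" for i using measurable_comp[OF T_mu Um] by (simp add: o_def)
    have inc1: "incseq (\<lambda>i x. U i (pinv x))" and inc2: "incseq (\<lambda>i x. U i (T x))"
      using incU by (auto simp: incseq_def le_fun_def)
    have l0: "(\<integral>\<^sup>+x. (SUP i. U i) x \<partial>mu) = (SUP i. \<integral>\<^sup>+x. U i x \<partial>mu)"
      using nn_integral_monotone_convergence_SUP[OF incU Um] by (simp add: image_comp)
    have l1: "(\<integral>\<^sup>+x. (SUP i. U i) (pinv x) \<partial>mu) = (SUP i. \<integral>\<^sup>+x. U i (pinv x) \<partial>mu)"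
      using nn_integral_monotone_convergence_SUP[OF inc1 m1] by (simp add: image_comp)
    have l2: "(\<integral>\<^sup>+x. (SUP i. U i) (T x) \<partial>mu) = (SUP i. \<integral>\<^sup>+x. U i (T x) \<partial>mu)"
      using nn_integral_monotone_convergence_SUP[OF inc2 m2] by (simp add: image_comp)
    have i1: "incseq (\<lambda>i. ennreal (1-p) * (\<integral>\<^sup>+x. U i (pinv x) \<partial>mu))"
      using inc1 by (auto simp: incseq_def le_fun_def intro!: mult_left_mono nn_integral_mono)
    have i2: "incseq (\<lambda>i. ennreal p * (\<integral>\<^sup>+x. U i (T x) \<partial>mu))"
      using inc2 by (auto simp: incseq_def le_fun_def intro!: mult_left_mono nn_integral_mono)
    show ?case
      unfolding l0 l1 l2 SUP_mult_left_ennreal ennreal_SUP_add[OF i1 i2, symmetric]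
      using PU by simp
  qed
qed

end



lemma SUP_min_ennreal: "(SUP n::nat. ennreal (min (real n) t)) = ennreal t"
proof (rule antisym)
  show "(SUP n::nat. ennreal (min (real n) t)) \<le> ennreal t"
    by (rule SUP_least) (simp add: ennreal_leI)
  obtain n :: nat where "t \<le> real n" using real_arch_simple by blast
  then have "ennreal t = ennreal (min (real n) t)" by simp
  also have "\<dots> \<le> (SUP n::nat. ennreal (min (real n) t))" by (rule SUP_upper) simp
  finally show "ennreal t \<le> (SUP n::nat. ennreal (min (real n) t))" .
qed

context fp begin

lemma AE_pos: "AE x in mu. the x > 0"
  using pos_AE by eventually_elim auto

lemma tm: assumes "G \<in> borel_measurable borel" shows "(\<lambda>x. G (the x)) \<in> borel_measurable mu"
  unfolding bm_mu by (rule the_meas[OF assms])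

lemma nnkey:
  assumes G: "G \<in> borel_measurable borel"
  shows "(\<integral>\<^sup>+x. ennreal (G (the x)) \<partial>mu) = ennreal (1-p) * (\<integral>\<^sup>+x. ennreal (G (1 / the x)) \<partial>mu)
     + ennreal p * (\<integral>\<^sup>+x. ennreal (G (1 / the x + 1)) \<partial>mu)"
proof -
  have g: "(\<lambda>x. ennreal (G (the x))) \<in> borel_measurable P1" using G by (intro the_meas) measurable
  have e1: "(\<integral>\<^sup>+x. ennreal (G (the (pinv x))) \<partial>mu) = (\<integral>\<^sup>+x. ennreal (G (1 / the x)) \<partial>mu)"
    by (rule nn_integral_cong_AE) (use pos_AE in \<open>eventually_elim, auto\<close>)
  have e2: "(\<integral>\<^sup>+x. ennreal (G (the (T x))) \<partial>mu) = (\<integral>\<^sup>+x. ennreal (G (1 / the x + 1)) \<partial>mu)"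
    by (rule nn_integral_cong_AE) (use pos_AE in \<open>eventually_elim, auto simp: T_def\<close>)
  show ?thesis using nnkey0[OF g] e1 e2 by simp
qed

lemma nn_int_eq:
  assumes "integrable mu f" "AE x in mu. 0 \<le> f x"
  shows "(\<integral>\<^sup>+x. ennreal (f x) \<partial>mu) = ennreal (integral\<^sup>L mu f)"
  using nn_integral_eq_integral[OF assms] .

lemma keyr:
  assumes G: "G \<in> borel_measurable borel" and nn: "\<And>v. v > 0 \<Longrightarrow> 0 \<le> G v"
    and i0: "integrable mu (\<lambda>x. G (the x))"
    and i1: "integrable mu (\<lambda>x. G (1 / the x))"
    and i2: "integrable mu (\<lambda>x. G (1 / the x + 1))"
  shows "(\<integral>x. G (the x) \<partial>mu) = (1-p) * (\<integral>x. G (1 / the x) \<partial>mu) + p * (\<integral>x. G (1 / the x + 1) \<partial>mu)"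
proof -
  have a0: "AE x in mu. 0 \<le> G (the x)" using AE_pos by eventually_elim (simp add: nn)
  have a1: "AE x in mu. 0 \<le> G (1 / the x)" using AE_pos by eventually_elim (simp add: nn)
  have a2: "AE x in mu. 0 \<le> G (1 / the x + 1)" using AE_pos by eventually_elim (simp add: nn add_pos_pos)
  have n1: "0 \<le> (\<integral>x. G (1 / the x) \<partial>mu)" using a1 by (rule integral_nonneg_AE)
  have n2: "0 \<le> (\<integral>x. G (1 / the x + 1) \<partial>mu)" using a2 by (rule integral_nonneg_AE)
  have n0: "0 \<le> (\<integral>x. G (the x) \<partial>mu)" using a0 by (rule integral_nonneg_AE)
  have "ennreal (\<integral>x. G (the x) \<partial>mu) = ennreal (1-p) * ennreal (\<integral>x. G (1 / the x) \<partial>mu) + ennreal p * ennreal (\<integral>x. G (1 / the x + 1) \<partial>mu)"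
    using nnkey[OF G] unfolding nn_int_eq[OF i0 a0] nn_int_eq[OF i1 a1] nn_int_eq[OF i2 a2] .
  also have "\<dots> = ennreal ((1-p) * (\<integral>x. G (1 / the x) \<partial>mu)) + ennreal (p * (\<integral>x. G (1 / the x + 1) \<partial>mu))"
    using p0 p1 n1 n2 by (simp add: ennreal_mult)
  also have "\<dots> = ennreal ((1-p) * (\<integral>x. G (1 / the x) \<partial>mu) + p * (\<integral>x. G (1 / the x + 1) \<partial>mu))"
    by (rule ennreal_plus[symmetric]) (use p0 p1 n1 n2 in auto)
  finally show ?thesis using n0 n1 n2 p0 p1 by (subst (asm) ennreal_inj) auto
qed

lemma bint:
  fixes f :: "proj \<Rightarrow> real"
  assumes "f \<in> borel_measurable mu" "AE x in mu. norm (f x) \<le> B"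
  shows "integrable mu f"
proof -
  interpret m: prob_space mu by (rule mu_prob)
  show ?thesis by (rule m.integrable_const_bound[OF assms(2) assms(1)])
qed

lemma trunc_int:
  assumes phi: "phi \<in> borel_measurable borel" and pos: "\<And>u. u > 0 \<Longrightarrow> phi u > 0"
  shows "integrable mu (\<lambda>x. min (real n) (phi (the x)))"
proof (rule bint)
  have "(\<lambda>v. min (real n) (phi v)) \<in> borel_measurable borel"
    using phi by (intro borel_measurable_min) auto
  then show "(\<lambda>x. min (real n) (phi (the x))) \<in> borel_measurable mu"
    by (rule tm)
  show "AE x in mu. norm (min (real n) (phi (the x))) \<le> real n"
    using AE_pos
  proof eventually_elim
    case (elim x)
    have "0 < phi (the x)" using pos elim by blast
    then show ?case by (simp add: abs_le_iff min_le_iff_disj)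
  qed
qed

lemma trunc_bound: "(\<integral>x. min (real n) (the x) \<partial>mu) \<le> 2"
proof -
  interpret m: prob_space mu by (rule mu_prob)
  define c where "c = real n"
  have ia: "integrable mu (\<lambda>x. min c (the x))" unfolding c_def by (rule trunc_int) auto
  have ib: "integrable mu (\<lambda>x. min c (1 / the x))" unfolding c_def by (rule trunc_int) auto
  have is': "integrable mu (\<lambda>x. min c (1 / the x + 1))" unfolding c_def
    by (rule trunc_int) (measurable, simp add: add_pos_pos)
  have ir: "integrable mu (\<lambda>x. min c (1 / (1 / the x + 1)))" unfolding c_def
    by (rule trunc_int) (measurable, simp add: add_pos_pos)
  define a where "a = (\<integral>x. min c (the x) \<partial>mu)"
  define b where "b = (\<integral>x. min c (1 / the x) \<partial>mu)"
  define S where "S = (\<integral>x. min c (1 / the x + 1) \<partial>mu)"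
  define R where "R = (\<integral>x. min c (1 / (1 / the x + 1)) \<partial>mu)"
  have k1: "a = (1-p) * b + p * S"
    unfolding a_def b_def S_def
    by (rule keyr[where G="\<lambda>v. min c v"]) (use ia ib is' c_def in auto)
  have k2: "b = (1-p) * a + p * R"
  proof -
    have "(\<integral>x. min c (1 / the x) \<partial>mu) = (1-p) * (\<integral>x. min c (1 / (1 / the x)) \<partial>mu) + p * (\<integral>x. min c (1 / (1 / the x + 1)) \<partial>mu)"
      by (rule keyr[where G="\<lambda>v. min c (1/v)"]) (use ia ib ir c_def in auto)
    then show ?thesis unfolding a_def b_def R_def by simp
  qed
  have "S \<le> (\<integral>x. min c (1 / the x) + 1 \<partial>mu)"
    unfolding S_def by (rule integral_mono) (use ib is' in auto)
  moreover have "m.prob UNIV = 1" using m.prob_space by simp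
  ultimately have hS: "S \<le> b + 1" unfolding b_def using ib by simp
  have "R \<le> (\<integral>x. 1 \<partial>mu)"
    unfolding R_def
  proof (rule integral_mono_AE[OF ir])
    show "AE x in mu. min c (1 / (1 / the x + 1)) \<le> 1" using AE_pos
    proof eventually_elim
      case (elim x)
      have pos: "0 < 1 / the x + 1" using elim by (simp add: add_pos_pos)
      have "1 \<le> 1 / the x + 1" using elim by simp
      then have "1 / (1 / the x + 1) \<le> 1" using divide_le_eq_1_pos[OF pos] by simp
      then show ?case by (simp add: min.coboundedI2)
    qed
  qed simp
  then have hR: "R \<le> 1" using m.prob_space by simp
  have "p * S \<le> p * (b + 1)" using hS p0 by (simp add: mult_left_mono)
  moreover have "p * R \<le> p" using hR p0 by (simp add: mult_left_le)
  ultimately have "p * a \<le> 2 * p"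
  proof -
    assume h1: "p * S \<le> p * (b + 1)" and h2: "p * R \<le> p"
    have e1: "a = b - p * b + p * S" using k1 by (simp add: algebra_simps)
    have e2: "b = a - p * a + p * R" using k2 by (simp add: algebra_simps)
    have e3: "p * (b + 1) = p * b + p" by (simp add: algebra_simps)
    show ?thesis using e1 e2 e3 h1 h2 by linarith
  qed
  then show ?thesis unfolding a_def c_def using p0 by simp
qed

lemma int_the: "integrable mu (\<lambda>x. the x)"
proof (rule integrableI_nonneg)
  show "(\<lambda>x. the x) \<in> borel_measurable mu" by (rule tm) simp
  show "AE x in mu. 0 \<le> the x" using AE_pos by eventually_elim simp
  have "(\<integral>\<^sup>+x. ennreal (the x) \<partial>mu) = (\<integral>\<^sup>+x. (SUP n::nat. ennreal (min (real n) (the x))) \<partial>mu)"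
    by (simp add: SUP_min_ennreal)
  also have "\<dots> = (SUP n::nat. \<integral>\<^sup>+x. ennreal (min (real n) (the x)) \<partial>mu)"
  proof (rule nn_integral_monotone_convergence_SUP)
    show "incseq (\<lambda>n x. ennreal (min (real n) (the x)))"
      by (auto simp: incseq_def le_fun_def intro!: ennreal_leI)
    show "(\<lambda>x. ennreal (min (real n) (the x))) \<in> borel_measurable mu" for n by (rule tm) measurable
  qed
  also have "\<dots> \<le> ennreal 2"
  proof (rule SUP_least)
    fix n :: nat
    have "(\<integral>\<^sup>+x. ennreal (min (real n) (the x)) \<partial>mu) = ennreal (\<integral>x. min (real n) (the x) \<partial>mu)"
      by (rule nn_int_eq) (rule trunc_int, simp, simp, use AE_pos in \<open>eventually_elim, simp\<close>)
    then show "(\<integral>\<^sup>+x. ennreal (min (real n) (the x)) \<partial>mu) \<le> ennreal 2"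
      using ennreal_leI[OF trunc_bound[of n]] by simp
  qed
  finally show "(\<integral>\<^sup>+x. ennreal (the x) \<partial>mu) < \<infinity>" by (simp add: le_less_trans)
qed

end



lemma gA_meas: "(\<lambda>v::real. ln (1 + v)) \<in> borel_measurable borel" by measurable
lemma gB_meas: "(\<lambda>v::real. ln (1 + 1/v)) \<in> borel_measurable borel" by measurable

context fp begin

lemma fin_nn: "integrable mu f \<Longrightarrow> AE x in mu. 0 \<le> f x \<Longrightarrow> (\<integral>\<^sup>+x. ennreal (f x) \<partial>mu) < \<infinity>"
  using nn_int_eq by simp

lemma int_inv: "integrable mu (\<lambda>x. 1 / the x)"
proof (rule integrableI_nonneg)
  show "(\<lambda>x. 1 / the x) \<in> borel_measurable mu" by (rule tm) measurable
  show "AE x in mu. 0 \<le> 1 / the x" using AE_pos by eventually_elim simp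
  have ir: "integrable mu (\<lambda>x. 1 / (1 / the x + 1))"
    by (rule bint[where B=1]) (measurable, rule tm, measurable,
        use AE_pos in \<open>eventually_elim, simp add: add_pos_pos\<close>)
  have f1: "(\<integral>\<^sup>+x. ennreal (the x) \<partial>mu) < \<infinity>"
    by (rule fin_nn[OF int_the]) (use AE_pos in \<open>eventually_elim, simp\<close>)
  have f2: "(\<integral>\<^sup>+x. ennreal (1 / (1 / the x + 1)) \<partial>mu) < \<infinity>"
    by (rule fin_nn[OF ir]) (use AE_pos in \<open>eventually_elim, simp add: add_pos_pos\<close>)
  have "(\<integral>\<^sup>+x. ennreal (1 / the x) \<partial>mu) = ennreal (1-p) * (\<integral>\<^sup>+x. ennreal (the x) \<partial>mu)
     + ennreal p * (\<integral>\<^sup>+x. ennreal (1 / (1 / the x + 1)) \<partial>mu)"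
    using nnkey[where G="\<lambda>v. 1 / v"] by simp
  then show "(\<integral>\<^sup>+x. ennreal (1 / the x) \<partial>mu) < \<infinity>"
    using f1 f2 by (simp add: ennreal_mult_less_top)
qed

lemma main_mu:
  "integrable mu (\<lambda>x. ln (the x)) \<and> integrable mu (\<lambda>x. ln (1 + the x))
   \<and> (\<integral>x. ln (the x) \<partial>mu) = p / 2 * (\<integral>x. ln (1 + the x) \<partial>mu)"
proof -
  interpret m: prob_space mu by (rule mu_prob)
  have iA: "integrable mu (\<lambda>x. ln (1 + the x))"
  proof (rule Bochner_Integration.integrable_bound[OF int_the])
    show "(\<lambda>x. ln (1 + the x)) \<in> borel_measurable mu" by (rule tm) measurable
    show "AE x in mu. norm (ln (1 + the x)) \<le> norm (the x)"
      using AE_pos by eventually_elim (simp add: ln_add_one_self_le_self)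
  qed
  have iB: "integrable mu (\<lambda>x. ln (1 + 1 / the x))"
  proof (rule Bochner_Integration.integrable_bound[OF int_inv])
    show "(\<lambda>x. ln (1 + 1 / the x)) \<in> borel_measurable mu" by (rule tm) measurable
    show "AE x in mu. norm (ln (1 + 1 / the x)) \<le> norm (1 / the x)"
      using AE_pos by eventually_elim (simp add: ln_add_one_self_le_self)
  qed
  have iC: "integrable mu (\<lambda>x. ln (1 + 1 / (1 / the x + 1)))"
  proof (rule bint[where B=1])
    show "(\<lambda>x. ln (1 + 1 / (1 / the x + 1))) \<in> borel_measurable mu" by (rule tm) measurable
    show "AE x in mu. norm (ln (1 + 1 / (1 / the x + 1))) \<le> 1"
      using AE_pos
    proof eventually_elim
      case (elim x)
      define w where "w = 1 / (1 / the x + 1)"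
      have pos: "0 < 1 / the x + 1" using elim by (simp add: add_pos_pos)
      have q1: "0 < w" unfolding w_def using pos by simp
      have "1 \<le> 1 / the x + 1" using elim by simp
      then have q2: "w \<le> 1" unfolding w_def using divide_le_eq_1_pos[OF pos] by simp
      have l1: "ln (1 + w) \<le> w" using q1 by (intro ln_add_one_self_le_self) simp
      have l0: "0 \<le> ln (1 + w)" using q1 by simp
      have "norm (ln (1 + w)) = ln (1 + w)" using l0 by simp
      then have "norm (ln (1 + w)) \<le> 1" using l1 q2 by linarith
      then show ?case unfolding w_def .
    qed
  qed
  have eD: "AE x in mu. ln (1 + (1 / the x + 1)) = ln (1 + 1 / the x) + ln (1 + 1 / (1 / the x + 1))"
    using AE_pos
  proof eventually_elim
    case (elim x)
    define u where "u = the x"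
    have u: "u > 0" using elim u_def by simp
    have h: "1 / (1/u + 1) = u / (1 + u)" using u by (simp add: field_simps)
    have "(1 + 1 / u) * (1 + u / (1 + u)) = 1 + (1 / u + 1)"
    proof -
      have a: "1 + 1/u = (1+u)/u" using u by (simp add: field_simps)
      have b: "1 + u/(1+u) = (1+2*u)/(1+u)" using u by (simp add: field_simps)
      have c: "1 + (1/u + 1) = (1+2*u)/u" using u by (simp add: field_simps)
      have "(1+u)/u * ((1+2*u)/(1+u)) = (1+2*u)/u" using u by simp
      then show ?thesis unfolding a b c .
    qed
    then have "1 + (1 / u + 1) = (1 + 1 / u) * (1 + 1 / (1 / u + 1))" unfolding h by simp
    moreover have "0 < 1 + 1 / u" "0 < 1 + 1 / (1 / u + 1)" using u by (auto simp: add_pos_pos)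
    ultimately show ?case unfolding u_def[symmetric] by (simp add: ln_mult)
  qed
  have mA: "(\<lambda>x. ln (1 + the x)) \<in> borel_measurable mu" by (rule tm) measurable
  have mB: "(\<lambda>x. ln (1 + 1 / the x)) \<in> borel_measurable mu" by (rule tm) measurable
  have mC: "(\<lambda>x. ln (1 + 1 / (1 / the x + 1))) \<in> borel_measurable mu" by (rule tm) measurable
  have mD: "(\<lambda>x. ln (1 + (1 / the x + 1))) \<in> borel_measurable mu" by (rule tm) measurable
  have mL: "(\<lambda>x. ln (the x)) \<in> borel_measurable mu" by (rule tm) measurable
  have mBC: "(\<lambda>x. ln (1 + 1 / the x) + ln (1 + 1 / (1 / the x + 1))) \<in> borel_measurable mu"
    using mB mC by (rule borel_measurable_add)
  have mAB: "(\<lambda>x. ln (1 + the x) - ln (1 + 1 / the x)) \<in> borel_measurable mu"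
    using mA mB by (rule borel_measurable_diff)
  have iBC: "integrable mu (\<lambda>x. ln (1 + 1 / the x) + ln (1 + 1 / (1 / the x + 1)))"
    using iB iC by (rule Bochner_Integration.integrable_add)
  have iAB: "integrable mu (\<lambda>x. ln (1 + the x) - ln (1 + 1 / the x))"
    using iA iB by (rule Bochner_Integration.integrable_diff)
  have iD: "integrable mu (\<lambda>x. ln (1 + (1 / the x + 1)))"
    using integrable_cong_AE[OF mD mBC eD] iBC by simp
  have kA: "(\<integral>x. ln (1 + the x) \<partial>mu) = (1-p) * (\<integral>x. ln (1 + 1 / the x) \<partial>mu) + p * (\<integral>x. ln (1 + (1 / the x + 1)) \<partial>mu)"
  proof (rule keyr[where G="\<lambda>v. ln (1 + v)"])
    show "(\<lambda>v::real. ln (1 + v)) \<in> borel_measurable borel" by (rule gA_meas)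
    show "0 \<le> ln (1 + v)" if "0 < v" for v :: real using that by simp
  qed (fact iA, fact iB, fact iD)
  have kB0: "(\<integral>x. ln (1 + 1 / the x) \<partial>mu) = (1-p) * (\<integral>x. ln (1 + 1 / (1 / the x)) \<partial>mu) + p * (\<integral>x. ln (1 + 1 / (1 / the x + 1)) \<partial>mu)"
  proof (rule keyr[where G="\<lambda>v. ln (1 + 1 / v)"])
    show "(\<lambda>v::real. ln (1 + 1 / v)) \<in> borel_measurable borel" by (rule gB_meas)
    show "0 \<le> ln (1 + 1 / v)" if "0 < v" for v :: real using that by simp
    show "integrable mu (\<lambda>x. ln (1 + 1 / (1 / the x)))" using iA by simp
  qed (fact iB, fact iC)
  have kB: "(\<integral>x. ln (1 + 1 / the x) \<partial>mu) = (1-p) * (\<integral>x. ln (1 + the x) \<partial>mu) + p * (\<integral>x. ln (1 + 1 / (1 / the x + 1)) \<partial>mu)"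
    using kB0 by simp
  have dD: "(\<integral>x. ln (1 + (1 / the x + 1)) \<partial>mu) = (\<integral>x. ln (1 + 1 / the x) \<partial>mu) + (\<integral>x. ln (1 + 1 / (1 / the x + 1)) \<partial>mu)"
    using integral_cong_AE[OF mD mBC eD] Bochner_Integration.integral_add[OF iB iC] by simp
  have eL: "AE x in mu. ln (the x) = ln (1 + the x) - ln (1 + 1 / the x)"
    using AE_pos
  proof eventually_elim
    case (elim x)
    have "1 + the x = the x * (1 + 1 / the x)" using elim by (simp add: field_simps)
    moreover have "0 < 1 + 1 / the x" using elim by (simp add: add_pos_pos)
    ultimately have "ln (1 + the x) = ln (the x) + ln (1 + 1 / the x)"
      using elim by (simp add: ln_mult)
    then show ?case by simp
  qed
  have iL: "integrable mu (\<lambda>x. ln (the x))"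
    using integrable_cong_AE[OF mL mAB eL] iAB by simp
  have dL: "(\<integral>x. ln (the x) \<partial>mu) = (\<integral>x. ln (1 + the x) \<partial>mu) - (\<integral>x. ln (1 + 1 / the x) \<partial>mu)"
    using integral_cong_AE[OF mL mAB eL] Bochner_Integration.integral_diff[OF iA iB] by simp
  define A where "A = (\<integral>x. ln (1 + the x) \<partial>mu)"
  define B where "B = (\<integral>x. ln (1 + 1 / the x) \<partial>mu)"
  define C where "C = (\<integral>x. ln (1 + 1 / (1 / the x + 1)) \<partial>mu)"
  have 1: "A = (1-p) * B + p * (B + C)" using kA dD unfolding A_def B_def C_def by simp
  have 2: "B = (1-p) * A + p * C" using kB unfolding A_def B_def C_def by simp
  have q1: "(1-p) * B + p * (B + C) = B + p * C" by (simp add: algebra_simps)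
  have q2: "(1-p) * A = A - p * A" by (simp add: algebra_simps)
  have q3: "p / 2 * A = (p * A) / 2" by simp
  have "A - B = p / 2 * A" using 1 2 q1 q2 q3 by linarith
  then show ?thesis using iL iA dL unfolding A_def B_def by simp
qed

lemma main_M:
  "integrable M (\<lambda>\<omega>. ln (the (X \<omega>))) \<and> integrable M (\<lambda>\<omega>. ln (1 + the (X \<omega>)))
   \<and> (\<integral>\<omega>. ln (the (X \<omega>)) \<partial>M) = p / 2 * (\<integral>\<omega>. ln (1 + the (X \<omega>)) \<partial>M)"
proof -
  have m1: "(\<lambda>x. ln (the x)) \<in> borel_measurable P1" by (rule the_meas) measurable
  have m2: "(\<lambda>x. ln (1 + the x)) \<in> borel_measurable P1" by (rule the_meas) measurable
  show ?thesis
    using main_mu unfolding mu_def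
    by (simp add: integrable_distr_eq[OF Xm m1] integrable_distr_eq[OF Xm m2]
        integral_distr[OF Xm m1] integral_distr[OF Xm m2])
qed

end


theorem mainTheorem2:
  fixes M :: "'a measure" and X :: "'a \<Rightarrow> proj" and eps :: "'a \<Rightarrow> real" and p :: real
  assumes "prob_space M"
    and "0 < p" and "p < 1"
    and "X \<in> measurable M P1"
    and "eps \<in> borel_measurable M"
    and "\<forall>\<omega>\<in>space M. eps \<omega> \<in> {0, 1}"
    and "measure M {\<omega>\<in>space M. eps \<omega> = 1} = p"
    and "\<forall>A\<in>sets P1. \<forall>B\<in>sets (borel :: real measure).
         measure M ({\<omega>\<in>space M. X \<omega> \<in> A} \<inter> {\<omega>\<in>space M. eps \<omega> \<in> B})
         = measure M {\<omega>\<in>space M. X \<omega> \<in> A} * measure M {\<omega>\<in>space M. eps \<omega> \<in> B}"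
    and "distr M P1 X = distr M P1 (\<lambda>\<omega>. padd (pinv (X \<omega>)) (eps \<omega>))"
  shows "integrable M (\<lambda>\<omega>. ln (the (X \<omega>)))
    \<and> integrable M (\<lambda>\<omega>. ln (1 + the (X \<omega>)))
    \<and> (\<integral>\<omega>. ln (the (X \<omega>)) \<partial>M) = p / 2 * (\<integral>\<omega>. ln (1 + the (X \<omega>)) \<partial>M)"
  proof -
  have "fp M X eps p" unfolding fp_def using assms by blast
  then show ?thesis by (rule fp.main_M)
qed

end
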